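(* Let $\lambda\geqslant\omega$ be a cardinal and $n$ a positive integer, and let $\mathscr{I}_\lambda^n$ carry any Hausdorff topology making it a topological semigroup. Let $S$ be a topological semigroup such that $S\times S$ is countably compact. Then every continuous homomorphism $h\colon\mathscr{I}_\lambda^n\to S$ is annihilating, i.e. $(s)h=(t)h$ for all $s,t\in\mathscr{I}_\lambda^n$.
   Context: A topological semigroup is a Hausdorff space with a continuous associative multiplication. For a set $X$ of cardinality $\lambda$, $\mathscr{I}(X)$ is the semigroup of all partial one-to-one maps of $X$ (including the empty map) under composition $x(\alpha\beta)=(x\alpha)\beta$ on $\operatorname{dom}(\alpha\beta)=\{y\in\operatorname{dom}\alpha: y\alpha\in\operatorname{dom}\beta\}$; the rank of $\alpha$ is $|\operatorname{ran}\alpha|$, and $\mathscr{I}_\lambda^n=\{\alpha\in\mathscr{I}(X):\operatorname{rank}\alpha\leqslant n\}$. A homomorphism is annihilating if it is constant. $\omega$ is the first infinite cardinal. *)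

theory Defs
  imports "HOL-Analysis.Analysis"
begin

definition countably_compact_space :: "'a topology \<Rightarrow> bool" where
  "countably_compact_space T \<longleftrightarrow>
    (\<forall>\<U>. countable \<U> \<longrightarrow> (\<forall>U\<in>\<U>. openin T U) \<longrightarrow> topspace T \<subseteq> \<Union>\<U>
       \<longrightarrow> (\<exists>\<F>\<subseteq>\<U>. finite \<F> \<and> topspace T \<subseteq> \<Union>\<F>))"

definition top_semigroup :: "'a topology \<Rightarrow> ('a \<Rightarrow> 'a \<Rightarrow> 'a) \<Rightarrow> bool" where
  "top_semigroup T m \<longleftrightarrow>
    Hausdorff_space T \<and>
    (\<forall>x\<in>topspace T. \<forall>y\<in>topspace T. m x y \<in> topspace T) \<and>
    (\<forall>x\<in>topspace T. \<forall>y\<in>topspace T. \<forall>z\<in>topspace T. m (m x y) z = m x (m y z)) \<and>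
    continuous_map (prod_topology T T) T (\<lambda>(x, y). m x y)"

definition partial_injections :: "'a set \<Rightarrow> ('a \<Rightarrow> 'a option) set" where
  "partial_injections X = {\<alpha>. dom \<alpha> \<subseteq> X \<and> ran \<alpha> \<subseteq> X \<and> inj_on \<alpha> (dom \<alpha>)}"

text \<open>Composition in the paper's right-action convention: x(\<alpha>\<beta>) = (x\<alpha>)\<beta>.\<close>
definition pmult :: "('a \<Rightarrow> 'a option) \<Rightarrow> ('a \<Rightarrow> 'a option) \<Rightarrow> ('a \<Rightarrow> 'a option)" where
  "pmult \<alpha> \<beta> = \<beta> \<circ>\<^sub>m \<alpha>"

definition prank :: "('a \<Rightarrow> 'a option) \<Rightarrow> nat" where
  "prank \<alpha> = card (ran \<alpha>)"

definition I_rank :: "'a set \<Rightarrow> nat \<Rightarrow> ('a \<Rightarrow> 'a option) set" where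
  "I_rank X n = {\<alpha> \<in> partial_injections X. finite (ran \<alpha>) \<and> prank \<alpha> \<le> n}"

end

theory Submission
  imports Defs
begin

lemma cc_accum:
  fixes z :: "nat \<Rightarrow> _" assumes cc: "countably_compact_space T" and z: "\<And>j. z j \<in> topspace T"
  shows "\<exists>p\<in>topspace T. \<forall>W. openin T W \<and> p \<in> W \<longrightarrow> infinite {j. z j \<in> W}"
proof (rule ccontr)
  assume H: "\<not> ?thesis"
  define U where "U k = topspace T - T closure_of (z ` {k..})" for k
  have opn: "openin T (U k)" for k unfolding U_def by auto
  have mono: "U i \<subseteq> U k" if "i \<le> k" for i k
    unfolding U_def using that by (intro Diff_mono order_refl closure_of_mono) auto
  have cov: "topspace T \<subseteq> \<Union>(range U)"
  proof
    fix p assume p: "p \<in> topspace T"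
    then obtain W where W: "openin T W" "p \<in> W" "finite {j. z j \<in> W}" using H by blast
    define k where "k = Suc (Max (insert 0 {j. z j \<in> W}))"
    have "\<forall>j\<ge>k. z j \<notin> W"
    proof (intro allI impI)
      fix j assume "j \<ge> k"
      show "z j \<notin> W"
      proof
        assume "z j \<in> W"
        then have "j \<le> Max (insert 0 {j. z j \<in> W})" using W(3) by (intro Max_ge) auto
        with \<open>j \<ge> k\<close> show False unfolding k_def by simp
      qed
    qed
    then have "p \<notin> T closure_of (z ` {k..})" using W unfolding in_closure_of by blast
    then show "p \<in> \<Union>(range U)" using p unfolding U_def by blast
  qed
  obtain F where F: "F \<subseteq> range U" "finite F" "topspace T \<subseteq> \<Union>F"
    using cc[unfolded countably_compact_space_def, rule_format, of "range U"] opn cov by blast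
  then obtain I where I: "finite I" "F = U ` I" by (meson finite_subset_image)
  define K where "K = Max (insert 0 I)"
  have "U i \<subseteq> U K" if "i \<in> I" for i using that I(1) unfolding K_def by (intro mono) auto
  then have "\<Union>F \<subseteq> U K" using I by auto
  moreover have "z K \<in> T closure_of (z ` {K..})"
    by (rule closure_of_subset[THEN subsetD]) (use z in auto)
  ultimately show False using F(3) z[of K] unfolding U_def by blast
qed

lemma key:
  fixes a b :: "nat \<Rightarrow> _" assumes ts: "top_semigroup S m" and cc: "countably_compact_space (prod_topology S S)"
    and ab: "\<And>j. a j \<in> topspace S" "\<And>j. b j \<in> topspace S"
    and c: "\<And>j. m (a j) (b j) = c" and d: "\<And>j k. j \<noteq> k \<Longrightarrow> m (a j) (b k) = d"
  shows "c = d"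
proof -
  have H: "Hausdorff_space S" and cm: "continuous_map (prod_topology S S) S (\<lambda>(x, y). m x y)"
    and cl: "\<And>x y. x \<in> topspace S \<Longrightarrow> y \<in> topspace S \<Longrightarrow> m x y \<in> topspace S"
    using ts unfolding top_semigroup_def by auto
  obtain p where p: "p \<in> topspace (prod_topology S S)"
    "\<And>W. openin (prod_topology S S) W \<Longrightarrow> p \<in> W \<Longrightarrow> infinite {j. (a j, b j) \<in> W}"
    using cc_accum[OF cc, of "\<lambda>j. (a j, b j)"] ab by auto
  obtain x y where xy: "p = (x, y)" by fastforce
  have x: "x \<in> topspace S" and y: "y \<in> topspace S" using p(1) xy by auto
  have cS: "c \<in> topspace S" using c[of 0] cl ab by metis
  have dS: "d \<in> topspace S" using d[of 0 1] cl ab by (metis zero_neq_one)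
  have mS: "m x y \<in> topspace S" using cl x y by auto
  have "c = m x y"
  proof (rule ccontr)
    assume "c \<noteq> m x y"
    then obtain U V where UV: "openin S U" "openin S V" "c \<in> U" "m x y \<in> V" "disjnt U V"
      using H cS mS unfolding Hausdorff_space_def by blast
    let ?W = "{q \<in> topspace (prod_topology S S). (\<lambda>(x, y). m x y) q \<in> V}"
    have "openin (prod_topology S S) ?W" using cm UV(2) by (rule openin_continuous_map_preimage)
    moreover have "p \<in> ?W" using p(1) xy UV(4) by auto
    ultimately have "infinite {j. (a j, b j) \<in> ?W}" using p(2) by blast
    then obtain j where "(a j, b j) \<in> ?W" by (metis (no_types, lifting) empty_Collect_eq finite.emptyI)
    then have "c \<in> V" using c by auto
    then show False using UV by (auto simp: disjnt_def)
  qed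
  moreover have "d = m x y"
  proof (rule ccontr)
    assume "d \<noteq> m x y"
    then obtain U V where UV: "openin S U" "openin S V" "d \<in> U" "m x y \<in> V" "disjnt U V"
      using H dS mS unfolding Hausdorff_space_def by blast
    let ?W = "{q \<in> topspace (prod_topology S S). (\<lambda>(x, y). m x y) q \<in> V}"
    have "openin (prod_topology S S) ?W" using cm UV(2) by (rule openin_continuous_map_preimage)
    moreover have "(x, y) \<in> ?W" using p(1) xy UV(4) by auto
    ultimately have "\<exists>A B. openin S A \<and> openin S B \<and> x \<in> A \<and> y \<in> B \<and> A \<times> B \<subseteq> ?W"
      by (rule openin_prod_topology_alt[THEN iffD1, rule_format])
    then obtain A B where AB: "openin S A" "openin S B" "x \<in> A" "y \<in> B" "A \<times> B \<subseteq> ?W"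
      by blast
    have "openin (prod_topology S S) (A \<times> B)" using AB by (simp add: openin_prod_Times_iff)
    then have inf: "infinite {j. (a j, b j) \<in> A \<times> B}" using p(2)[of "A \<times> B"] xy AB(3,4) by blast
    obtain j where j: "(a j, b j) \<in> A \<times> B" using inf by (metis (no_types, lifting) empty_Collect_eq finite.emptyI)
    obtain k where k: "(a k, b k) \<in> A \<times> B" "k \<noteq> j"
    proof -
      have "infinite ({j. (a j, b j) \<in> A \<times> B} - {j})" using inf by simp
      then obtain k where "k \<in> {j. (a j, b j) \<in> A \<times> B} - {j}" by (metis finite.emptyI ex_in_conv)
      then show ?thesis using that by auto
    qed
    have "(a j, b k) \<in> ?W" using j k AB(5) by auto
    then have "d \<in> V" using d[OF k(2)[symmetric]] by auto
    then show False using UV by (auto simp: disjnt_def)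
  qed
  ultimately show ?thesis by simp
qed

lemma dom_ran_bij:
  assumes "inj_on s (dom s)"
  shows "bij_betw (\<lambda>d. the (s d)) (dom s) (ran s)"
  unfolding bij_betw_def
proof
  show "inj_on (\<lambda>d. the (s d)) (dom s)"
    using assms unfolding inj_on_def dom_def by force
  show "(\<lambda>d. the (s d)) ` dom s = ran s"
    unfolding dom_def ran_def by force
qed

lemma main_eq:
  fixes X :: "'a set" and s :: "'a \<Rightarrow> 'a option"
  assumes X: "infinite X" and s: "s \<in> I_rank X n"
    and ts: "top_semigroup S m" and cc: "countably_compact_space (prod_topology S S)"
    and hc: "\<And>t. t \<in> I_rank X n \<Longrightarrow> h t \<in> topspace S"
    and hom: "\<And>s t. s \<in> I_rank X n \<Longrightarrow> t \<in> I_rank X n \<Longrightarrow> h (pmult s t) = m (h s) (h t)"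
  shows "h s = h Map.empty"
proof -
  obtain f :: "nat \<Rightarrow> 'a" where f: "inj f" "range f \<subseteq> X"
    using infinite_countable_subset[OF X] by blast
  define D where "D = dom s"
  have sX: "dom s \<subseteq> X" "ran s \<subseteq> X" "inj_on s (dom s)" "finite (ran s)" "card (ran s) \<le> n"
    using s unfolding I_rank_def partial_injections_def prank_def by auto
  have bij: "bij_betw (\<lambda>d. the (s d)) D (ran s)" unfolding D_def by (rule dom_ran_bij[OF sX(3)])
  have finD: "finite D" using bij sX(4) bij_betw_finite by blast
  have cardD: "card D \<le> n" using bij sX(5) bij_betw_same_card by fastforce
  have cD: "countable D" using finD by (rule countable_finite)
  define ue where "ue j d = f (prod_encode (j, to_nat_on D d))" for j d
  have ue_eq: "ue j d = ue k d' \<longleftrightarrow> j = k \<and> d = d'" if "d \<in> D" "d' \<in> D" for j k d d'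
  proof -
    have "ue j d = ue k d' \<longleftrightarrow> prod_encode (j, to_nat_on D d) = prod_encode (k, to_nat_on D d')"
      unfolding ue_def using f(1) by (auto dest: injD)
    also have "\<dots> \<longleftrightarrow> j = k \<and> d = d'"
      using that cD by (auto simp: prod_encode_eq)
    finally show ?thesis .
  qed
  have inj_ue: "inj_on (ue j) D" for j using ue_eq by (auto intro: inj_onI)
  have ueX: "ue j d \<in> X" for j d using f(2) unfolding ue_def by auto
  define u where "u j = (\<lambda>d. if d \<in> D then Some (ue j d) else None)" for j
  define v where "v j = (\<lambda>y. if y \<in> ue j ` D then s (inv_into D (ue j) y) else None)" for j
  have uv: "pmult (u j) (v j) = s" for j
  proof
    fix d show "pmult (u j) (v j) d = s d"
      using inj_ue[of j] unfolding pmult_def map_comp_def u_def v_def D_def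
      by (auto simp: domIff)
  qed
  have uv0: "pmult (u j) (v k) = Map.empty" if "j \<noteq> k" for j k
  proof
    fix d show "pmult (u j) (v k) d = None"
      using that ue_eq unfolding pmult_def map_comp_def u_def v_def by auto
  qed
  have ranu: "ran (u j) = ue j ` D" for j unfolding u_def ran_def by auto
  have domu: "dom (u j) = D" for j unfolding u_def dom_def by auto
  have uI: "u j \<in> I_rank X n" for j
    unfolding I_rank_def partial_injections_def prank_def
  proof (intro CollectI conjI)
    show "dom (u j) \<subseteq> X" using domu sX(1) D_def by auto
    show "ran (u j) \<subseteq> X" using ranu ueX by auto
    show "inj_on (u j) (dom (u j))" using inj_ue[of j] unfolding domu inj_on_def u_def by auto
    show "finite (ran (u j))" using ranu finD by auto
    show "card (ran (u j)) \<le> n" using ranu card_image[OF inj_ue] cardD by auto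
  qed
  have ranv: "ran (v j) \<subseteq> ran s" for j unfolding v_def ran_def by (auto split: if_splits)
  have domv: "dom (v j) \<subseteq> ue j ` D" for j unfolding v_def dom_def by (auto split: if_splits)
  have vI: "v j \<in> I_rank X n" for j
    unfolding I_rank_def partial_injections_def prank_def
  proof (intro CollectI conjI)
    show "dom (v j) \<subseteq> X" using domv ueX by blast
    show "ran (v j) \<subseteq> X" using ranv sX(2) by blast
    show "finite (ran (v j))" using ranv[of j] sX(4) by (rule finite_subset)
    show "card (ran (v j)) \<le> n" using card_mono[OF sX(4) ranv[of j]] sX(5) by linarith
    show "inj_on (v j) (dom (v j))"
    proof (rule inj_onI)
      fix y1 y2 assume y: "y1 \<in> dom (v j)" "y2 \<in> dom (v j)" "v j y1 = v j y2"
      obtain d1 where d1: "d1 \<in> D" "y1 = ue j d1" using y(1) domv by blast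
      obtain d2 where d2: "d2 \<in> D" "y2 = ue j d2" using y(2) domv by blast
      have "s d1 = s d2" using y(3) d1 d2 inj_ue[of j] unfolding v_def by auto
      then have "d1 = d2" using sX(3) d1(1) d2(1) unfolding D_def inj_on_def by blast
      then show "y1 = y2" using d1 d2 by simp
    qed
  qed
  have eI: "Map.empty \<in> I_rank X n"
    unfolding I_rank_def partial_injections_def prank_def by auto
  show ?thesis
  proof (rule key[OF ts cc, of "\<lambda>j. h (u j)" "\<lambda>j. h (v j)"])
    show "h (u j) \<in> topspace S" for j using hc uI by blast
    show "h (v j) \<in> topspace S" for j using hc vI by blast
    show "m (h (u j)) (h (v j)) = h s" for j using hom[OF uI vI] uv by metis
    show "m (h (u j)) (h (v k)) = h Map.empty" if "j \<noteq> k" for j k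
      using hom[OF uI vI] uv0[OF that] by metis
  qed
qed

theorem theorem8:
  fixes X :: "'a set" and n :: nat
    and T :: "('a \<Rightarrow> 'a option) topology"
    and S :: "'b topology" and m :: "'b \<Rightarrow> 'b \<Rightarrow> 'b"
    and h :: "('a \<Rightarrow> 'a option) \<Rightarrow> 'b"
  assumes "infinite X"
    and "n \<ge> 1"
    and "topspace T = I_rank X n"
    and "top_semigroup T pmult"
    and "top_semigroup S m"
    and "countably_compact_space (prod_topology S S)"
    and "continuous_map T S h"
    and "\<And>s t. s \<in> I_rank X n \<Longrightarrow> t \<in> I_rank X n \<Longrightarrow> h (pmult s t) = m (h s) (h t)"
  shows "\<forall>s\<in>I_rank X n. \<forall>t\<in>I_rank X n. h s = h t"
proof -
  have hc: "\<And>t. t \<in> I_rank X n \<Longrightarrow> h t \<in> topspace S"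
  proof -
    fix t assume "t \<in> I_rank X n"
    moreover have "h ` topspace T \<subseteq> topspace S"
      by (rule continuous_map_image_subset_topspace[OF assms(7)])
    ultimately show "h t \<in> topspace S" using assms(3) by blast
  qed
  have "h s = h Map.empty" if "s \<in> I_rank X n" for s
    by (rule main_eq[OF assms(1) that assms(5,6) hc assms(8)])
  then show ?thesis by simp
qed

end
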